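(* Let $D_1,D_2$ be two mutually $g$-orthogonal slant distributions on $M$ having the same slant angle $\theta\in(0,\frac{\pi}{2}]$. For $Z\in T_x\overline M$ ($x\in M$) let $fZ$ denote the orthogonal projection of $\varphi Z$ onto $(D_1\oplus D_2)_x$. Assume that (i) for all $x\in M$ and all $u,v\in (D_1\oplus D_2)_x$ with $g(u,v)=0$ one has $g(\varphi u,\varphi v)=0$; and (ii) $f(D_1)\subseteq D_1$ and $f(D_2)\subseteq D_2$. Then $D_1\oplus D_2$ is a slant distribution with slant angle $\theta$.
   Context: Let $(\overline M,g)$ be a smooth Riemannian manifold, fix $\epsilon\in\{-1,1\}$, and let $\varphi$ be a smooth $(1,1)$-tensor field on $\overline M$ with $g(\varphi X,Y)=\epsilon\, g(X,\varphi Y)$ for all vector fields $X,Y$. Let $M$ be either $\overline M$ itself or an immersed submanifold of $\overline M$ (points of $M$ are identified with their images). A distribution on $M$ means a smooth subbundle of constant rank of $T\overline M|_M$; its vector fields are its smooth sections; it is non-null if it is not $\{0\}$. The angle between a nonzero vector $u\in T_x\overline M$ and a linear subspace $V\subseteq T_x\overline M$ is the number $\theta\in[0,\frac{\pi}{2}]$ with $\cos\theta=\|\mathrm{pr}_V u\|/\|u\|$, where $\mathrm{pr}_V$ is the $g$-orthogonal projection onto $V$. A non-null distribution $D$ on $M$ is a slant distribution with slant angle $\theta\in(0,\frac{\pi}{2}]$ (a $\theta$-slant distribution) if for every $x\in M$ and every $v\in D_x\setminus\{0\}$ one has $\varphi v\neq 0$ and the angle between $\varphi v$ and $D_x$ equals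 $\theta$ (independent of $x$ and $v$). *)

theory Defs
  imports "HOL-Analysis.Analysis"
begin

text \<open>Pointwise model: every tangent space of the ambient manifold at a point of M
  is modelled (via an orthonormal frame) by a fixed finite-dimensional real inner
  product space 'a, the inner product being g.\<close>

definition proj :: "'a::euclidean_space set \<Rightarrow> 'a \<Rightarrow> 'a" where
  "proj V u = (THE p. p \<in> V \<and> (\<forall>w\<in>V. inner (u - p) w = 0))"

definition vangle :: "'a::euclidean_space \<Rightarrow> 'a set \<Rightarrow> real" where
  "vangle u V = arccos (norm (proj V u) / norm u)"

text \<open>A distribution on M: a subspace of each tangent space, of constant rank
  (smoothness is not modelled).\<close>
definition is_distribution :: "'p set \<Rightarrow> ('p \<Rightarrow> 'a::euclidean_space set) \<Rightarrow> bool" where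
  "is_distribution M D \<longleftrightarrow> (\<forall>x\<in>M. subspace (D x)) \<and>
     (\<forall>x\<in>M. \<forall>y\<in>M. dim (D x) = dim (D y))"

definition non_null :: "'p set \<Rightarrow> ('p \<Rightarrow> 'a::euclidean_space set) \<Rightarrow> bool" where
  "non_null M D \<longleftrightarrow> (\<exists>x\<in>M. D x \<noteq> {0})"

definition slant_distribution ::
  "'p set \<Rightarrow> ('p \<Rightarrow> 'a \<Rightarrow> 'a::euclidean_space) \<Rightarrow> ('p \<Rightarrow> 'a set) \<Rightarrow> real \<Rightarrow> bool" where
  "slant_distribution M \<phi> D \<theta> \<longleftrightarrow>
     is_distribution M D \<and> non_null M D \<and> 0 < \<theta> \<and> \<theta> \<le> pi / 2 \<and>
     (\<forall>x\<in>M. \<forall>v\<in>D x. v \<noteq> 0 \<longrightarrow> \<phi> x v \<noteq> 0 \<and> vangle (\<phi> x v) (D x) = \<theta>)"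

definition structure_tensor :: "('p \<Rightarrow> 'a \<Rightarrow> 'a::euclidean_space) \<Rightarrow> real \<Rightarrow> bool" where
  "structure_tensor \<phi> \<epsilon> \<longleftrightarrow> (\<epsilon> = 1 \<or> \<epsilon> = -1) \<and> (\<forall>x. linear (\<phi> x)) \<and>
     (\<forall>x X Y. inner (\<phi> x X) Y = \<epsilon> * inner X (\<phi> x Y))"

end

theory Submission
  imports Defs
begin

lemma proj_char:
  fixes V :: "'a::euclidean_space set"
  assumes "subspace V" "p \<in> V" "\<forall>w\<in>V. inner (u - p) w = 0"
  shows "proj V u = p"
  unfolding proj_def
proof (rule the_equality)
  show "p \<in> V \<and> (\<forall>w\<in>V. inner (u - p) w = 0)" using assms by auto
  fix q assume q: "q \<in> V \<and> (\<forall>w\<in>V. inner (u - q) w = 0)"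
  have d: "q - p \<in> V" using assms q by (simp add: subspace_diff)
  have "inner (u - p) (q - p) = 0" "inner (u - q) (q - p) = 0" using assms q d by auto
  then have "inner (q - p) (q - p) = 0" by (simp add: inner_diff_left)
  then show "q = p" by simp
qed

lemma proj_ex:
  fixes V :: "'a::euclidean_space set"
  assumes "subspace V"
  shows "proj V u \<in> V \<and> (\<forall>w\<in>V. inner (u - proj V u) w = 0)"
proof -
  obtain y z where y: "y \<in> span V" "\<And>w. w \<in> span V \<Longrightarrow> orthogonal z w" "u = y + z"
    using orthogonal_subspace_decomp_exists by blast
  have sv: "span V = V" using assms by (simp add: span_eq_iff)
  have "y \<in> V" "\<forall>w\<in>V. inner (u - y) w = 0"
    using y sv by (auto simp: orthogonal_def)
  moreover then have "proj V u = y" using proj_char assms by blast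
  ultimately show ?thesis by simp
qed

lemma proj_norm_le:
  fixes V :: "'a::euclidean_space set"
  assumes "subspace V"
  shows "norm (proj V u) \<le> norm u"
proof -
  let ?p = "proj V u"
  have "inner (u - ?p) ?p = 0" using proj_ex[OF assms] by auto
  then have "(norm u)^2 = (norm ?p)^2 + (norm (u - ?p))^2"
    by (smt (verit) add_diff_cancel_left' diff_add_cancel norm_add_Pythagorean orthogonal_def)
  then have "(norm ?p)^2 \<le> (norm u)^2" by simp
  then show ?thesis using abs_le_square_iff by fastforce
qed

lemma slant_ratio:
  fixes V :: "'a::euclidean_space set"
  assumes "subspace V" "w \<noteq> 0" "vangle w V = t"
  shows "norm (proj V w) = cos t * norm w"
proof -
  let ?r = "norm (proj V w) / norm w"
  have "0 \<le> ?r" "?r \<le> 1" using proj_norm_le[OF assms(1), of w] assms(2) by auto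
  then have "cos (arccos ?r) = ?r" by (intro cos_arccos) linarith+
  then have "cos t = ?r" using assms(3) unfolding vangle_def by simp
  then show ?thesis using assms(2) by simp
qed

theorem mainTheorem1:
  fixes M :: "'p set" and \<phi> :: "'p \<Rightarrow> 'a \<Rightarrow> 'a::euclidean_space" and \<epsilon> :: real
    and D1 D2 :: "'p \<Rightarrow> 'a set" and \<theta> :: real
  assumes "structure_tensor \<phi> \<epsilon>"
    and "slant_distribution M \<phi> D1 \<theta>"
    and "slant_distribution M \<phi> D2 \<theta>"
    and "\<forall>x\<in>M. \<forall>u\<in>D1 x. \<forall>v\<in>D2 x. inner u v = 0"
    and "\<forall>x\<in>M. \<forall>u\<in>D1 x + D2 x. \<forall>v\<in>D1 x + D2 x.
           inner u v = 0 \<longrightarrow> inner (\<phi> x u) (\<phi> x v) = 0"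
    and "\<forall>x\<in>M. \<forall>u\<in>D1 x. proj (D1 x + D2 x) (\<phi> x u) \<in> D1 x"
    and "\<forall>x\<in>M. \<forall>u\<in>D2 x. proj (D1 x + D2 x) (\<phi> x u) \<in> D2 x"
  shows "slant_distribution M \<phi> (\<lambda>x. D1 x + D2 x) \<theta>"
proof -
  have lin: "\<And>x. linear (\<phi> x)" using assms(1) unfolding structure_tensor_def by auto
  have S1: "\<And>x. x \<in> M \<Longrightarrow> subspace (D1 x)" and S2: "\<And>x. x \<in> M \<Longrightarrow> subspace (D2 x)"
    using assms(2,3) unfolding slant_distribution_def is_distribution_def by auto
  have th: "0 < \<theta>" "\<theta> \<le> pi/2" using assms(2) unfolding slant_distribution_def by auto
  have sl1: "\<And>x v. x \<in> M \<Longrightarrow> v \<in> D1 x \<Longrightarrow> v \<noteq> 0 \<Longrightarrow> \<phi> x v \<noteq> 0 \<and> vangle (\<phi> x v) (D1 x) = \<theta>"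
    using assms(2) unfolding slant_distribution_def by auto
  have sl2: "\<And>x v. x \<in> M \<Longrightarrow> v \<in> D2 x \<Longrightarrow> v \<noteq> 0 \<Longrightarrow> \<phi> x v \<noteq> 0 \<and> vangle (\<phi> x v) (D2 x) = \<theta>"
    using assms(3) unfolding slant_distribution_def by auto
  have seteq: "\<And>x. D1 x + D2 x = {a + b |a b. a \<in> D1 x \<and> b \<in> D2 x}"
    by (auto simp: set_plus_def)
  have S: "subspace (D1 x + D2 x)" if "x \<in> M" for x
    using subspace_sums[OF S1[OF that] S2[OF that]] seteq[of x] by simp
  have int0: "\<And>x. x \<in> M \<Longrightarrow> D1 x \<inter> D2 x = {0}"
  proof -
    fix x assume x: "x \<in> M"
    { fix a assume "a \<in> D1 x" "a \<in> D2 x"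
      then have "inner a a = 0" using assms(4) x by auto
      then have "a = 0" by simp }
    moreover have "0 \<in> D1 x \<inter> D2 x" using S1 S2 x by (simp add: subspace_0)
    ultimately show "D1 x \<inter> D2 x = {0}" by auto
  qed
  have dimeq: "dim (D1 x + D2 x) = dim (D1 x) + dim (D2 x)" if x: "x \<in> M" for x
  proof -
    have "dim {a+b|a b. a\<in>D1 x \<and> b\<in>D2 x} + dim (D1 x \<inter> D2 x) = dim (D1 x) + dim (D2 x)"
      by (rule dim_sums_Int[OF S1[OF x] S2[OF x]])
    moreover have "dim (D1 x \<inter> D2 x) = 0" using int0[OF x] by simp
    ultimately show ?thesis using seteq by simp
  qed
  have dist: "is_distribution M (\<lambda>x. D1 x + D2 x)"
  proof -
    have c1: "\<forall>x\<in>M. \<forall>y\<in>M. dim (D1 x) = dim (D1 y)"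
      using assms(2) unfolding slant_distribution_def is_distribution_def by blast
    have c2: "\<forall>x\<in>M. \<forall>y\<in>M. dim (D2 x) = dim (D2 y)"
      using assms(3) unfolding slant_distribution_def is_distribution_def by blast
    show ?thesis unfolding is_distribution_def
    proof (intro conjI ballI)
      fix x assume "x \<in> M" then show "subspace (D1 x + D2 x)" by (rule S)
    next
      fix x y assume "x \<in> M" "y \<in> M"
      then show "dim (D1 x + D2 x) = dim (D1 y + D2 y)"
        proof -
        have "dim (D1 x) = dim (D1 y)" "dim (D2 x) = dim (D2 y)"
          using c1 c2 \<open>x \<in> M\<close> \<open>y \<in> M\<close> by blast+
        then show ?thesis using dimeq[OF \<open>x \<in> M\<close>] dimeq[OF \<open>y \<in> M\<close>] by presburger
      qed
    qed
  qed
  have nn: "non_null M (\<lambda>x. D1 x + D2 x)"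
  proof -
    obtain x where x: "x \<in> M" "D1 x \<noteq> {0}" using assms(2)
      unfolding slant_distribution_def non_null_def by auto
    have "0 \<in> D1 x" by (rule subspace_0[OF S1[OF x(1)]])
    then obtain a where a: "a \<in> D1 x" "a \<noteq> 0" using x(2) by auto
    have "0 \<in> D2 x" by (rule subspace_0[OF S2[OF x(1)]])
    then have "a + 0 \<in> D1 x + D2 x" using a(1) by (rule set_plus_intro[rotated])
    then show ?thesis unfolding non_null_def using x a by auto
  qed
  have main: "\<phi> x v \<noteq> 0 \<and> vangle (\<phi> x v) (D1 x + D2 x) = \<theta>"
    if x: "x \<in> M" and v: "v \<in> D1 x + D2 x" "v \<noteq> 0" for x v
  proof -
    obtain v1 v2 where vv: "v1 \<in> D1 x" "v2 \<in> D2 x" "v = v1 + v2"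
      using v(1) unfolding set_plus_def by auto
    let ?D = "D1 x + D2 x"
    let ?P = "proj ?D"
    have z1: "0 \<in> D1 x" by (rule subspace_0[OF S1[OF x]])
    have z2: "0 \<in> D2 x" by (rule subspace_0[OF S2[OF x]])
    have in1: "a \<in> ?D" if "a \<in> D1 x" for a using set_plus_intro[OF that z2] by simp
    have in2: "a \<in> ?D" if "a \<in> D2 x" for a using set_plus_intro[OF z1 that] by simp
    have pe: "\<And>u. ?P u \<in> ?D \<and> (\<forall>w\<in>?D. inner (u - ?P u) w = 0)"
      by (rule proj_ex[OF S[OF x]])
    have ev: "\<phi> x v = \<phi> x v1 + \<phi> x v2" using vv lin by (simp add: linear_add)
    have pv: "?P (\<phi> x v) = ?P (\<phi> x v1) + ?P (\<phi> x v2)"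
    proof (rule proj_char[OF S[OF x]])
      show "?P (\<phi> x v1) + ?P (\<phi> x v2) \<in> ?D" using pe S[OF x] by (simp add: subspace_add)
      show "\<forall>w\<in>?D. inner (\<phi> x v - (?P (\<phi> x v1) + ?P (\<phi> x v2))) w = 0"
      proof
        fix w assume "w \<in> ?D"
        then have "inner (\<phi> x v1 - ?P (\<phi> x v1)) w = 0" "inner (\<phi> x v2 - ?P (\<phi> x v2)) w = 0"
          using pe by auto
        then show "inner (\<phi> x v - (?P (\<phi> x v1) + ?P (\<phi> x v2))) w = 0"
          unfolding ev by (simp add: algebra_simps inner_diff_left inner_add_left)
      qed
    qed
    have p1: "?P (\<phi> x v1) \<in> D1 x" using assms(6) x vv(1) by simp
    have p2: "?P (\<phi> x v2) \<in> D2 x" using assms(7) x vv(2) by simp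
    have q1: "proj (D1 x) (\<phi> x v1) = ?P (\<phi> x v1)"
      by (rule proj_char[OF S1[OF x] p1]) (use pe in1 in auto)
    have q2: "proj (D2 x) (\<phi> x v2) = ?P (\<phi> x v2)"
      by (rule proj_char[OF S2[OF x] p2]) (use pe in2 in auto)
    have n1: "norm (?P (\<phi> x v1)) = cos \<theta> * norm (\<phi> x v1)"
    proof (cases "v1 = 0")
      case True then show ?thesis using lin z1 q1 proj_char[OF S1[OF x] z1]
        by (simp add: linear_0)
    next
      case False
      have "\<phi> x v1 \<noteq> 0 \<and> vangle (\<phi> x v1) (D1 x) = \<theta>" by (rule sl1[OF x vv(1) False])
      then show ?thesis using slant_ratio[OF S1[OF x], of "\<phi> x v1" \<theta>] q1 by simp
    qed
    have n2: "norm (?P (\<phi> x v2)) = cos \<theta> * norm (\<phi> x v2)"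
    proof (cases "v2 = 0")
      case True then show ?thesis using lin z2 q2 proj_char[OF S2[OF x] z2]
        by (simp add: linear_0)
    next
      case False
      have "\<phi> x v2 \<noteq> 0 \<and> vangle (\<phi> x v2) (D2 x) = \<theta>" by (rule sl2[OF x vv(2) False])
      then show ?thesis using slant_ratio[OF S2[OF x], of "\<phi> x v2" \<theta>] q2 by simp
    qed
    have o1: "inner (?P (\<phi> x v1)) (?P (\<phi> x v2)) = 0"
      using assms(4) x p1 p2 by simp
    have o0: "inner v1 v2 = 0" using assms(4) x vv by simp
    have o2: "inner (\<phi> x v1) (\<phi> x v2) = 0"
      using assms(5) x in1[OF vv(1)] in2[OF vv(2)] o0 by simp
    have A: "(norm (?P (\<phi> x v)))^2 = (norm (?P (\<phi> x v1)))^2 + (norm (?P (\<phi> x v2)))^2"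
      unfolding pv by (rule norm_add_Pythagorean) (simp add: orthogonal_def o1)
    have B: "(norm (\<phi> x v))^2 = (norm (\<phi> x v1))^2 + (norm (\<phi> x v2))^2"
      unfolding ev by (rule norm_add_Pythagorean) (simp add: orthogonal_def o2)
    have nz: "\<phi> x v \<noteq> 0"
    proof
      assume "\<phi> x v = 0"
      then have "(norm (\<phi> x v1))^2 + (norm (\<phi> x v2))^2 = 0" using B by simp
      then have "\<phi> x v1 = 0" "\<phi> x v2 = 0" by (simp_all add: add_nonneg_eq_0_iff)
      then have "v1 = 0" "v2 = 0" using sl1[OF x vv(1)] sl2[OF x vv(2)] by auto
      then show False using vv v by simp
    qed
    have cpos: "0 \<le> cos \<theta>" using th by (simp add: cos_ge_zero)
    have "(norm (?P (\<phi> x v)))^2 = (cos \<theta> * norm (\<phi> x v))^2"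
      using A B n1 n2 by (simp add: power_mult_distrib algebra_simps)
    then have "norm (?P (\<phi> x v)) = cos \<theta> * norm (\<phi> x v)"
      using cpos by (simp add: power2_eq_iff_nonneg)
    then have "vangle (\<phi> x v) ?D = arccos (cos \<theta>)"
      unfolding vangle_def using nz by simp
    also have "\<dots> = \<theta>" using th by (intro arccos_cos) auto
    finally show ?thesis using nz by simp
  qed
  show ?thesis unfolding slant_distribution_def using dist nn th main by auto
qed

end
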